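(* Let $k\ge1$ and $[k+]=\{1,2,\ldots,k\}$. For every set $A$ with $\emptyset\neq A\subsetneq[k+]$ we have $d([k+])\ge d(A)$, and the inequality is strict for $k\neq3$.
   Context: For $A,B\subseteq\mathbb{N}=\{0,1,\ldots\}$, $A+B=\{a+b:a\in A,b\in B\}$. For a nonempty finite $C\subseteq\mathbb{N}$, $d(C)$ is the number of sets $B\subseteq\mathbb{N}$ such that $B+D=C$ for some $D\subseteq\mathbb{N}$. *)

theory Defs
  imports Main
begin

definition sumset :: "nat set \<Rightarrow> nat set \<Rightarrow> nat set" where
  "sumset A B = {a + b | a b. a \<in> A \<and> b \<in> B}"

definition d :: "nat set \<Rightarrow> nat" where
  "d C = card {B. \<exists>D. sumset B D = C}"

end

theory Submission
  imports Defs
begin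


definition Tset :: "nat \<Rightarrow> nat set set" where
  "Tset n = {Y. 0 \<in> Y \<and> Y \<subseteq> {..n} \<and> (\<forall>x\<le>n. \<exists>y\<in>Y. y \<le> x \<and> x \<le> y + (n - Max Y))}"

definition Eset :: "nat \<Rightarrow> nat set set" where
  "Eset n = Tset (Suc n) - Tset n"

lemma Tset_finite: "finite (Tset n)"
proof -
  have "Tset n \<subseteq> Pow {..n}" unfolding Tset_def by auto
  thus ?thesis by (rule finite_subset) auto
qed

lemma Tset_elem_finite: "Y \<in> Tset n \<Longrightarrow> finite Y"
  unfolding Tset_def by (auto intro: finite_subset)

lemma Tset_mono: "Tset n \<subseteq> Tset (Suc n)"
proof
  fix Y assume Y: "Y \<in> Tset n"
  hence fin: "finite Y" and ne: "Y \<noteq> {}" using Tset_elem_finite unfolding Tset_def by auto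
  have M: "Max Y \<in> Y" "Max Y \<le> n" using Y fin ne unfolding Tset_def by auto
  show "Y \<in> Tset (Suc n)" unfolding Tset_def
  proof (intro CollectI conjI allI impI)
    show "0 \<in> Y" "Y \<subseteq> {..Suc n}" using Y unfolding Tset_def by auto
    fix x assume x: "x \<le> Suc n"
    show "\<exists>y\<in>Y. y \<le> x \<and> x \<le> y + (Suc n - Max Y)"
    proof (cases "x \<le> n")
      case True
      then obtain y where "y \<in> Y" "y \<le> x" "x \<le> y + (n - Max Y)" using Y unfolding Tset_def by blast
      thus ?thesis by (intro bexI[of _ y]) auto
    next
      case False
      thus ?thesis using M x by (intro bexI[of _ "Max Y"]) auto
    qed
  qed
qed

lemma interval_Tset: "p \<le> n \<Longrightarrow> {0..p} \<in> Tset n"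
proof -
  assume p: "p \<le> n"
  have M: "Max {0..p} = p" by (rule Max_eqI) auto
  have cov: "\<exists>y\<in>{0..p}. y \<le> x \<and> x \<le> y + (n - p)" if "x \<le> n" for x
  proof (cases "x \<le> p")
    case True thus ?thesis by (intro bexI[of _ x]) auto
  next
    case False thus ?thesis using that p by (intro bexI[of _ p]) auto
  qed
  show ?thesis unfolding Tset_def mem_Collect_eq M using cov p by auto
qed

lemma zero_Tset: "{0} \<in> Tset n"
  using interval_Tset[of 0 n] by simp

lemma Tset_card_pos: "card (Tset n) \<ge> 1"
  using zero_Tset[of n] Tset_finite[of n] by (metis One_nat_def Suc_leI card_gt_0_iff empty_iff)



lemma Tset_D:
  assumes "Y \<in> Tset n"
  shows "finite Y" "Y \<noteq> {}" "0 \<in> Y" "Max Y \<in> Y" "Max Y \<le> n" "\<And>y. y \<in> Y \<Longrightarrow> y \<le> Max Y"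
    "\<And>x. x \<le> n \<Longrightarrow> \<exists>y\<in>Y. y \<le> x \<and> x \<le> y + (n - Max Y)"
proof -
  show f: "finite Y" using assms by (rule Tset_elem_finite)
  show z: "0 \<in> Y" using assms unfolding Tset_def by auto
  show ne: "Y \<noteq> {}" using z by auto
  show "Max Y \<in> Y" using f ne by simp
  thus "Max Y \<le> n" using assms unfolding Tset_def by auto
  show "\<And>y. y \<in> Y \<Longrightarrow> y \<le> Max Y" using f by simp
  show "\<And>x. x \<le> n \<Longrightarrow> \<exists>y\<in>Y. y \<le> x \<and> x \<le> y + (n - Max Y)" using assms unfolding Tset_def by auto
qed

lemma Tset_I:
  assumes "0 \<in> Y" "Y \<subseteq> {..n}" "\<And>x. x \<le> n \<Longrightarrow> \<exists>y\<in>Y. y \<le> x \<and> x \<le> y + (n - Max Y)"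
  shows "Y \<in> Tset n"
  using assms unfolding Tset_def by auto

definition ins1 :: "nat set \<Rightarrow> nat set" where "ins1 Y = insert (Suc (Max Y)) Y"
definition ins2 :: "nat set \<Rightarrow> nat set" where "ins2 Y = insert (Suc (Suc (Max Y))) Y"

lemma Max_ins1: "finite Y \<Longrightarrow> Y \<noteq> {} \<Longrightarrow> Max (ins1 Y) = Suc (Max Y)"
  unfolding ins1_def by (simp add: max_def)

lemma Max_ins2: "finite Y \<Longrightarrow> Y \<noteq> {} \<Longrightarrow> Max (ins2 Y) = Suc (Suc (Max Y))"
  unfolding ins2_def by (simp add: max_def)

lemma ins1_T:
  assumes Y: "Y \<in> Tset n" shows "ins1 Y \<in> Tset (Suc n)"
proof (rule Tset_I)
  note D = Tset_D[OF Y]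
  have M: "Max (ins1 Y) = Suc (Max Y)" using D by (simp add: Max_ins1)
  show "0 \<in> ins1 Y" using D unfolding ins1_def by auto
  show "ins1 Y \<subseteq> {..Suc n}" using D unfolding ins1_def by (auto dest: D(6))
  fix x assume x: "x \<le> Suc n"
  show "\<exists>y\<in>ins1 Y. y \<le> x \<and> x \<le> y + (Suc n - Max (ins1 Y))"
  proof (cases "x \<le> Max Y")
    case True
    then obtain y where "y \<in> Y" "y \<le> x" "x \<le> y + (n - Max Y)" using D(5) D(7)[of x] by auto
    thus ?thesis unfolding M by (intro bexI[of _ y]) (auto simp: ins1_def)
  next
    case False
    thus ?thesis unfolding M using x D(5) by (intro bexI[of _ "Suc (Max Y)"]) (auto simp: ins1_def)
  qed
qed

lemma ins1_T_rev:
  assumes Y: "finite Y" "0 \<in> Y" and I: "ins1 Y \<in> Tset (Suc n)" shows "Y \<in> Tset n"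
proof (rule Tset_I)
  have ne: "Y \<noteq> {}" using Y by auto
  note D = Tset_D[OF I]
  have M: "Max (ins1 Y) = Suc (Max Y)" using Y ne by (simp add: Max_ins1)
  have mn: "Max Y \<le> n" using D(5) M by simp
  show "0 \<in> Y" by fact
  show "Y \<subseteq> {..n}" using mn Max_ge[OF Y(1)] by (meson atMost_iff order_trans subsetI)
  fix x assume x: "x \<le> n"
  show "\<exists>y\<in>Y. y \<le> x \<and> x \<le> y + (n - Max Y)"
  proof (cases "x \<le> Max Y")
    case True
    then obtain y where y: "y \<in> ins1 Y" "y \<le> x" "x \<le> y + (Suc n - Max (ins1 Y))" using D(7)[of x] x by auto
    hence "y \<in> Y" using True unfolding ins1_def by auto
    thus ?thesis using y M by (intro bexI[of _ y]) auto
  next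
    case False
    have mx: "Max Y \<le> x" using False by linarith
    have mem: "Max Y \<in> Y" using Y ne by simp
    have "x \<le> Max Y + (n - Max Y)" using x mn by linarith
    thus ?thesis using mx mem by blast
  qed
qed

lemma ins2_T:
  assumes Y: "Y \<in> Tset n" and lt: "Max Y < n" shows "ins2 Y \<in> Tset (Suc (Suc n))"
proof (rule Tset_I)
  note D = Tset_D[OF Y]
  have M: "Max (ins2 Y) = Suc (Suc (Max Y))" using D by (simp add: Max_ins2)
  show "0 \<in> ins2 Y" using D unfolding ins2_def by auto
  show "ins2 Y \<subseteq> {..Suc (Suc n)}" using D unfolding ins2_def by (auto dest: D(6))
  fix x assume x: "x \<le> Suc (Suc n)"
  show "\<exists>y\<in>ins2 Y. y \<le> x \<and> x \<le> y + (Suc (Suc n) - Max (ins2 Y))"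
  proof (cases "x \<le> Max Y")
    case True
    then obtain y where "y \<in> Y" "y \<le> x" "x \<le> y + (n - Max Y)" using D(5) D(7)[of x] by auto
    thus ?thesis unfolding M by (intro bexI[of _ y]) (auto simp: ins2_def)
  next
    case False
    show ?thesis
    proof (cases "x = Suc (Max Y)")
      case True
      thus ?thesis unfolding M using lt D(4) by (intro bexI[of _ "Max Y"]) (auto simp: ins2_def)
    next
      case False
      thus ?thesis unfolding M using x \<open>\<not> x \<le> Max Y\<close> D(5) by (intro bexI[of _ "Suc (Suc (Max Y))"]) (auto simp: ins2_def)
    qed
  qed
qed

lemma ins2_T_rev:
  assumes Y: "finite Y" "0 \<in> Y" and I: "ins2 Y \<in> Tset (Suc (Suc n))" shows "Y \<in> Tset n"
proof (rule Tset_I)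
  have ne: "Y \<noteq> {}" using Y by auto
  note D = Tset_D[OF I]
  have M: "Max (ins2 Y) = Suc (Suc (Max Y))" using Y ne by (simp add: Max_ins2)
  have mn: "Max Y \<le> n" using D(5) M by simp
  show "0 \<in> Y" by fact
  show "Y \<subseteq> {..n}" using mn Max_ge[OF Y(1)] by (meson atMost_iff order_trans subsetI)
  fix x assume x: "x \<le> n"
  show "\<exists>y\<in>Y. y \<le> x \<and> x \<le> y + (n - Max Y)"
  proof (cases "x \<le> Max Y")
    case True
    then obtain y where y: "y \<in> ins2 Y" "y \<le> x" "x \<le> y + (Suc (Suc n) - Max (ins2 Y))" using D(7)[of x] x by auto
    hence "y \<in> Y" using True unfolding ins2_def by auto
    thus ?thesis using y M by (intro bexI[of _ y]) auto
  next
    case False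
    have mx: "Max Y \<le> x" using False by linarith
    have mem: "Max Y \<in> Y" using Y ne by simp
    have "x \<le> Max Y + (n - Max Y)" using x mn by linarith
    thus ?thesis using mx mem by blast
  qed
qed

lemma gapless:
  assumes Y: "Y \<in> Tset n" and M: "Max Y = n" shows "Y = {0..n}"
proof
  note D = Tset_D[OF Y]
  show "Y \<subseteq> {0..n}" by (meson D(5) D(6) atLeastAtMost_iff le0 order_trans subsetI)
  show "{0..n} \<subseteq> Y"
  proof
    fix x assume "x \<in> {0..n}"
    then obtain y where "y \<in> Y" "y \<le> x" "x \<le> y + (n - Max Y)" using D(7)[of x] by auto
    thus "x \<in> Y" using M by auto
  qed
qed



lemma Eset_finite: "finite (Eset n)"
  unfolding Eset_def using Tset_finite by auto

lemma Tset_card_Suc: "card (Tset (Suc n)) = card (Tset n) + card (Eset n)"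
proof -
  have "card (Eset n) = card (Tset (Suc n)) - card (Tset n)"
    unfolding Eset_def by (rule card_Diff_subset[OF Tset_finite Tset_mono])
  moreover have "card (Tset n) \<le> card (Tset (Suc n))" by (rule card_mono[OF Tset_finite Tset_mono])
  ultimately show ?thesis by simp
qed

lemma ins1_E: assumes Y: "Y \<in> Eset m" shows "ins1 Y \<in> Eset (Suc m)"
proof -
  have a: "Y \<in> Tset (Suc m)" and b: "Y \<notin> Tset m" using Y unfolding Eset_def by auto
  have "ins1 Y \<in> Tset (Suc (Suc m))" using ins1_T[OF a] .
  moreover have "ins1 Y \<notin> Tset (Suc m)" using ins1_T_rev[OF Tset_D(1)[OF a] Tset_D(3)[OF a]] b by blast
  ultimately show ?thesis unfolding Eset_def by simp
qed

lemma ins1_inv: assumes f: "finite Y" and ne: "Y \<noteq> {}" shows "ins1 Y - {Max (ins1 Y)} = Y"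
proof -
  have "Suc (Max Y) \<notin> Y" using Max_ge[OF f] by (metis Suc_n_not_le_n)
  thus ?thesis using f ne by (simp add: Max_ins1 ins1_def)
qed

lemma ins2_inv: assumes f: "finite Y" and ne: "Y \<noteq> {}" shows "ins2 Y - {Max (ins2 Y)} = Y"
proof -
  have nin: "Suc (Suc (Max Y)) \<notin> Y" using Max_ge[OF f] by (metis Suc_n_not_le_n le_SucI)
  show ?thesis by (subst Max_ins2[OF f ne]) (use nin in \<open>auto simp: ins2_def\<close>)
qed

lemma Eset_D: assumes "Y \<in> Eset m" shows "finite Y \<and> Y \<noteq> {}"
proof -
  have "Y \<in> Tset (Suc m)" using assms unfolding Eset_def by simp
  thus ?thesis using Tset_D(1,2) by blast
qed

lemma ins1_inj: "inj_on ins1 (Eset m)"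
  by (rule inj_onI) (metis ins1_inv Eset_D)

lemma Y0_E: "insert (Suc (Suc m)) {0..m} \<in> Eset (Suc (Suc m))"
proof -
  let ?Y = "insert (Suc (Suc m)) {0..m}"
  have M: "Max ?Y = Suc (Suc m)" by (rule Max_eqI) auto
  have in3: "?Y \<in> Tset (Suc (Suc (Suc m)))"
  proof (rule Tset_I)
    fix x assume x: "x \<le> Suc (Suc (Suc m))"
    show "\<exists>y\<in>?Y. y \<le> x \<and> x \<le> y + (Suc (Suc (Suc m)) - Max ?Y)"
      unfolding M
    proof (cases "x \<le> m")
      case True thus "\<exists>y\<in>?Y. y \<le> x \<and> x \<le> y + (Suc (Suc (Suc m)) - Suc (Suc m))" by (intro bexI[of _ x]) auto
    next
      case False
      show "\<exists>y\<in>?Y. y \<le> x \<and> x \<le> y + (Suc (Suc (Suc m)) - Suc (Suc m))"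
      proof (cases "x = Suc m")
        case True thus ?thesis by (intro bexI[of _ m]) auto
      next
        case False thus ?thesis using x \<open>\<not> x \<le> m\<close> by (intro bexI[of _ "Suc (Suc m)"]) auto
      qed
    qed
  qed auto
  have "?Y \<notin> Tset (Suc (Suc m))"
  proof
    assume "?Y \<in> Tset (Suc (Suc m))"
    hence "?Y = {0..Suc (Suc m)}" using gapless M by blast
    moreover have "Suc m \<notin> ?Y" by auto
    ultimately show False by auto
  qed
  thus ?thesis using in3 unfolding Eset_def by auto
qed

lemma E_mono: "card (Eset m) \<le> card (Eset (Suc m))"
proof -
  have "card (Eset m) = card (ins1 ` Eset m)" by (rule card_image[symmetric, OF ins1_inj])
  also have "\<dots> \<le> card (Eset (Suc m))" by (rule card_mono[OF Eset_finite]) (auto intro: ins1_E)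
  finally show ?thesis .
qed

lemma E_mono_strict: "card (Eset (Suc m)) < card (Eset (Suc (Suc m)))"
proof -
  let ?Y = "insert (Suc (Suc m)) {0..m}"
  have "card (Eset (Suc m)) = card (ins1 ` Eset (Suc m))" by (rule card_image[symmetric, OF ins1_inj])
  also have "\<dots> < card (Eset (Suc (Suc m)))"
  proof (rule psubset_card_mono[OF Eset_finite])
    have "?Y \<notin> ins1 ` Eset (Suc m)"
    proof
      assume "?Y \<in> ins1 ` Eset (Suc m)"
      then obtain W where W: "W \<in> Eset (Suc m)" "?Y = ins1 W" by auto
      have fW: "finite W" "W \<noteq> {}" using Eset_D[OF W(1)] by auto
      have "Max ?Y = Suc (Max W)" using W fW by (simp add: Max_ins1)
      moreover have "Max ?Y = Suc (Suc m)" by (rule Max_eqI) auto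
      ultimately have "Max W = Suc m" by simp
      moreover have "Max W \<in> ?Y" using W(2) fW unfolding ins1_def by auto
      ultimately show False by auto
    qed
    thus "ins1 ` Eset (Suc m) \<subset> Eset (Suc (Suc m))" using Y0_E ins1_E by blast
  qed
  finally show ?thesis .
qed



lemma ins2_E:
  assumes Y: "Y \<in> Eset m" and ni: "Y \<noteq> {0..Suc m}"
  shows "ins2 Y \<in> Eset (Suc (Suc m))"
proof -
  have a: "Y \<in> Tset (Suc m)" and b: "Y \<notin> Tset m" using Y unfolding Eset_def by auto
  have "Max Y \<noteq> Suc m" using gapless[OF a] ni by blast
  hence lt: "Max Y < Suc m" using Tset_D(5)[OF a] by simp
  have "ins2 Y \<in> Tset (Suc (Suc (Suc m)))" using ins2_T[OF a lt] .
  moreover have "ins2 Y \<notin> Tset (Suc (Suc m))" using ins2_T_rev[OF Tset_D(1)[OF a] Tset_D(3)[OF a]] b by blast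
  ultimately show ?thesis unfolding Eset_def by simp
qed

lemma E_fib: "card (Eset (Suc m)) + card (Eset m) \<le> card (Eset (Suc (Suc m)))"
proof -
  define Y0 where "Y0 = insert (Suc (Suc m)) {0..m}"
  define g where "g Y = (if Y = {0..Suc m} then Y0 else ins2 Y)" for Y
  have MY0: "Max Y0 = Suc (Suc m)" unfolding Y0_def by (rule Max_eqI) auto
  have gE: "g ` Eset m \<subseteq> Eset (Suc (Suc m))"
    using Y0_E ins2_E unfolding g_def Y0_def by auto
  have ginj: "inj_on g (Eset m)"
  proof (rule inj_onI)
    fix Y1 Y2 assume Y1: "Y1 \<in> Eset m" and Y2: "Y2 \<in> Eset m" and eq: "g Y1 = g Y2"
    have f1: "finite Y1" "Y1 \<noteq> {}" using Eset_D[OF Y1] by auto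
    have f2: "finite Y2" "Y2 \<noteq> {}" using Eset_D[OF Y2] by auto
    have nm: False if "Y \<in> Eset m" "Y \<noteq> {0..Suc m}" "Y0 = ins2 Y" for Y
    proof -
      have f: "finite Y" "Y \<noteq> {}" using Eset_D[OF that(1)] by auto
      have "Y = ins2 Y - {Max (ins2 Y)}" using ins2_inv[OF f] by simp
      also have "\<dots> = Y0 - {Max Y0}" using that(3) by simp
      also have "\<dots> = {0..m}" unfolding MY0 unfolding Y0_def by auto
      finally have "Y \<in> Tset m" using interval_Tset[of m m] by simp
      thus False using that(1) unfolding Eset_def by simp
    qed
    show "Y1 = Y2"
    proof (cases "Y1 = {0..Suc m}")
      case True
      show ?thesis
      proof (cases "Y2 = {0..Suc m}")
        case True thus ?thesis using \<open>Y1 = {0..Suc m}\<close> by simp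
      next
        case False
        hence "Y0 = ins2 Y2" using eq True unfolding g_def by simp
        thus ?thesis using nm[OF Y2 False] by simp
      qed
    next
      case False
      show ?thesis
      proof (cases "Y2 = {0..Suc m}")
        case True
        hence "Y0 = ins2 Y1" using eq False unfolding g_def by simp
        thus ?thesis using nm[OF Y1 False] by simp
      next
        case False2: False
        hence "ins2 Y1 = ins2 Y2" using eq False unfolding g_def by simp
        thus ?thesis using ins2_inv[OF f1] ins2_inv[OF f2] by metis
      qed
    qed
  qed
  have disj: "ins1 ` Eset (Suc m) \<inter> g ` Eset m = {}"
  proof -
    have P: "\<exists>p. Max Z = Suc (Suc p) \<and> Suc p \<notin> Z" if Zin: "Z \<in> g ` Eset m" for Z
    proof -
      obtain Y where Y: "Y \<in> Eset m" "Z = g Y" using Zin by auto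
      have f: "finite Y" "Y \<noteq> {}" using Eset_D[OF Y(1)] by auto
      show ?thesis
      proof (cases "Y = {0..Suc m}")
        case True
        hence "Z = Y0" using Y unfolding g_def by simp
        thus ?thesis using MY0 unfolding Y0_def by auto
      next
        case False
        hence "Z = ins2 Y" using Y unfolding g_def by simp
        moreover have "Suc (Max Y) \<notin> Y" using Max_ge[OF f(1)] by (metis Suc_n_not_le_n)
        ultimately show ?thesis using Max_ins2[OF f] unfolding ins2_def by auto
      qed
    qed
    have nP: "\<not> (\<exists>p. Max Z = Suc (Suc p) \<and> Suc p \<notin> Z)" if Zin: "Z \<in> ins1 ` Eset (Suc m)" for Z
    proof -
      obtain W where W: "W \<in> Eset (Suc m)" "Z = ins1 W" using Zin by auto
      have f: "finite W" "W \<noteq> {}" using Eset_D[OF W(1)] by auto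
      have "Max W \<in> Z" using W(2) f unfolding ins1_def by auto
      thus ?thesis using Max_ins1[OF f] W(2) by auto
    qed
    show ?thesis using P nP by blast
  qed
  have "card (Eset (Suc m)) + card (Eset m) = card (ins1 ` Eset (Suc m)) + card (g ` Eset m)"
    using card_image[OF ins1_inj] card_image[OF ginj] by simp
  also have "\<dots> = card (ins1 ` Eset (Suc m) \<union> g ` Eset m)"
    by (rule card_Un_disjoint[symmetric]) (use disj Eset_finite in auto)
  also have "\<dots> \<le> card (Eset (Suc (Suc m)))"
    by (rule card_mono[OF Eset_finite]) (use gE ins1_E in auto)
  finally show ?thesis .
qed

lemma interval_notin: "n < p \<Longrightarrow> {0..p} \<notin> Tset n"
proof
  assume "n < p" "{0..p} \<in> Tset n"
  hence "p \<in> {..n}" unfolding Tset_def by auto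
  thus False using \<open>n < p\<close> by simp
qed

lemma T0_card: "card (Tset 0) = 1"
proof -
  have "Tset 0 = {{0}}"
  proof
    show "Tset 0 \<subseteq> {{0}}" unfolding Tset_def by auto
    show "{{0}} \<subseteq> Tset 0" using zero_Tset by auto
  qed
  thus ?thesis by simp
qed

lemma E_pos: "n \<le> 1 \<Longrightarrow> card (Eset n) \<ge> 1"
proof -
  assume n: "n \<le> 1"
  have "{0..Suc n} \<in> Eset n" unfolding Eset_def using interval_Tset[of "Suc n" "Suc n"] interval_notin[of n "Suc n"] by simp
  thus ?thesis using Eset_finite[of n] by (metis One_nat_def Suc_leI card_gt_0_iff empty_iff)
qed

lemma Q: "card (Tset j) \<le> card (Eset (Suc j))"
proof (induction j)
  case 0 thus ?case using T0_card E_pos[of 1] by simp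
next
  case (Suc j)
  have "card (Tset (Suc j)) = card (Tset j) + card (Eset j)" by (rule Tset_card_Suc)
  also have "\<dots> \<le> card (Eset (Suc j)) + card (Eset j)" using Suc.IH by simp
  also have "\<dots> \<le> card (Eset (Suc (Suc j)))" by (rule E_fib)
  finally show ?case .
qed

lemma ratio: "3 * card (Tset n) \<le> 2 * card (Tset (Suc n))"
  and ratio_strict: "n \<noteq> 1 \<Longrightarrow> 3 * card (Tset n) < 2 * card (Tset (Suc n))"
proof -
  have main: "card (Tset n) \<le> 2 * card (Eset n) \<and> (n \<noteq> 1 \<longrightarrow> card (Tset n) < 2 * card (Eset n))"
  proof (cases n)
    case 0 thus ?thesis using T0_card E_pos[of 0] by simp
  next
    case (Suc j)
    have "card (Tset n) = card (Tset j) + card (Eset j)" using Suc Tset_card_Suc by simp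
    moreover have "card (Tset j) \<le> card (Eset n)" using Q[of j] Suc by simp
    moreover have "card (Eset j) \<le> card (Eset n)" using E_mono[of j] Suc by simp
    moreover have "n \<noteq> 1 \<longrightarrow> card (Eset j) < card (Eset n)"
    proof
      assume "n \<noteq> 1"
      then obtain i where "j = Suc i" using Suc by (cases j) auto
      thus "card (Eset j) < card (Eset n)" using E_mono_strict[of i] Suc by simp
    qed
    ultimately show ?thesis by linarith
  qed
  show "3 * card (Tset n) \<le> 2 * card (Tset (Suc n))" using main Tset_card_Suc[of n] by linarith
  show "n \<noteq> 1 \<Longrightarrow> 3 * card (Tset n) < 2 * card (Tset (Suc n))" using main Tset_card_Suc[of n] by linarith
qed



lemma chain: "(j + 2) * card (Tset n) \<le> 2 * card (Tset (n + j))"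
proof (induction j)
  case 0 thus ?case by simp
next
  case (Suc j)
  let ?c = "card (Tset n)" and ?t1 = "card (Tset (n + j))" and ?t2 = "card (Tset (n + Suc j))"
  have r: "3 * ?t1 \<le> 2 * ?t2" using ratio[of "n + j"] by simp
  have a: "2 * ((Suc j + 2) * ?c) \<le> 3 * ((j + 2) * ?c)"
  proof -
    have "2 * ((Suc j + 2) * ?c) = (2 * j + 6) * ?c" by (simp add: algebra_simps)
    also have "\<dots> \<le> (3 * j + 6) * ?c" by (intro mult_le_mono1) simp
    also have "\<dots> = 3 * ((j + 2) * ?c)" by (simp add: algebra_simps)
    finally show ?thesis .
  qed
  show ?case using a r Suc.IH by linarith
qed

lemma chain_strict: "2 \<le> j \<Longrightarrow> (j + 2) * card (Tset n) < 2 * card (Tset (n + j))"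
proof -
  assume "2 \<le> j"
  then obtain i where j: "j = Suc (Suc i)" by (metis add_2_eq_Suc le_Suc_ex)
  let ?c = "card (Tset n)" and ?t1 = "card (Tset (n + Suc i))" and ?t2 = "card (Tset (n + j))"
  have IH: "(Suc i + 2) * ?c \<le> 2 * ?t1" by (rule chain)
  have r: "3 * ?t1 \<le> 2 * ?t2" using ratio[of "n + Suc i"] j by simp
  have c: "?c \<ge> 1" by (rule Tset_card_pos)
  have a: "2 * ((j + 2) * ?c) < 3 * ((Suc i + 2) * ?c)"
  proof -
    have "2 * ((j + 2) * ?c) = (2 * i + 8) * ?c" using j by (simp add: algebra_simps)
    also have "\<dots> < (3 * i + 9) * ?c" using c by (intro mult_less_mono1) auto
    also have "\<dots> = 3 * ((Suc i + 2) * ?c)" by (simp add: algebra_simps)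
    finally show ?thesis .
  qed
  show ?thesis using a r IH by linarith
qed

lemma T_strict_mono: "m < n \<Longrightarrow> card (Tset m) < card (Tset n)"
proof (induction n)
  case 0 thus ?case by simp
next
  case (Suc n)
  have "card (Tset n) < card (Tset (Suc n))" using ratio[of n] Tset_card_pos[of n] by linarith
  thus ?case using Suc by (cases "m = n") auto
qed

lemma T_mono_card: "m \<le> n \<Longrightarrow> card (Tset m) \<le> card (Tset n)"
  using T_strict_mono by (cases "m = n") (auto intro: less_imp_le)



lemma sumset_shift:
  "sumset ((\<lambda>y. y + s) ` B) ((\<lambda>x. x + u) ` D) = (\<lambda>z. z + (s + u)) ` sumset B D"
  unfolding sumset_def by (auto simp: image_iff) (metis add.assoc add.commute)+

lemma sumT:
  assumes Y: "Y \<in> Tset n" shows "sumset Y {0..n - Max Y} = {0..n}"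
proof
  note D = Tset_D[OF Y]
  show "sumset Y {0..n - Max Y} \<subseteq> {0..n}"
  proof
    fix z assume "z \<in> sumset Y {0..n - Max Y}"
    then obtain y j where "y \<in> Y" "j \<le> n - Max Y" "z = y + j" unfolding sumset_def by auto
    moreover have "y \<le> Max Y" using D(6) \<open>y \<in> Y\<close> .
    ultimately show "z \<in> {0..n}" using D(5) by auto
  qed
  show "{0..n} \<subseteq> sumset Y {0..n - Max Y}"
  proof
    fix x assume "x \<in> {0..n}"
    then obtain y where y: "y \<in> Y" "y \<le> x" "x \<le> y + (n - Max Y)" using D(7)[of x] by auto
    have "x = y + (x - y)" using y by simp
    moreover have "x - y \<in> {0..n - Max Y}" using y by auto
    ultimately show "x \<in> sumset Y {0..n - Max Y}" unfolding sumset_def using y(1) by blast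
  qed
qed

lemma lower_bound:
  assumes k: "k \<ge> 1" shows "2 * card (Tset (k - 1)) \<le> d {1..k}"
proof -
  define n where "n = k - 1"
  have kn: "k = Suc n" using k unfolding n_def by simp
  define h where "h p = (\<lambda>y. y + fst p) ` snd p" for p :: "nat \<times> nat set"
  have hin: "h p \<in> {B. \<exists>D. sumset B D = {1..k}}" if p: "p \<in> {0, 1} \<times> Tset n" for p
  proof -
    obtain t Y where pt: "p = (t, Y)" and t: "t \<in> {0, 1}" and Y: "Y \<in> Tset n" using p by auto
    have "sumset ((\<lambda>y. y + t) ` Y) ((\<lambda>x. x + (1 - t)) ` {0..n - Max Y}) = (\<lambda>z. z + (t + (1 - t))) ` {0..n}"
      by (simp only: sumset_shift sumT[OF Y])
    also have "\<dots> = (\<lambda>z. z + 1) ` {0..n}" using t by auto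
    also have "\<dots> = {1..k}" unfolding kn by (simp add: image_add_atLeastAtMost)
    finally show ?thesis unfolding h_def pt by auto
  qed
  have hinj: "inj_on h ({0, 1} \<times> Tset n)"
  proof (rule inj_onI)
    fix p q assume p: "p \<in> {0, 1} \<times> Tset n" and q: "q \<in> {0, 1} \<times> Tset n" and eq: "h p = h q"
    obtain t Y where pt: "p = (t, Y)" and Y: "Y \<in> Tset n" using p by auto
    obtain s Z where qs: "q = (s, Z)" and Z: "Z \<in> Tset n" using q by auto
    have mn: "Min ((\<lambda>y. y + t) ` Y) = t" if "Y \<in> Tset n" for Y t
    proof (rule Min_eqI)
      show "finite ((\<lambda>y. y + t) ` Y)" using Tset_D(1)[OF that] by simp
      show "t \<in> (\<lambda>y. y + t) ` Y" using Tset_D(3)[OF that] by force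
    qed auto
    have "t = s" using eq mn[OF Y, of t] mn[OF Z, of s] unfolding h_def pt qs by simp
    moreover have "Y = Z" using eq unfolding h_def pt qs \<open>t = s\<close> by (simp add: inj_image_eq_iff)
    ultimately show "p = q" using pt qs by simp
  qed
  have "2 * card (Tset n) = card ({0, 1::nat} \<times> Tset n)" by (simp add: card_cartesian_product)
  also have "\<dots> = card (h ` ({0, 1} \<times> Tset n))" by (rule card_image[symmetric, OF hinj])
  also have "\<dots> \<le> d {1..k}" unfolding d_def
  proof (rule card_mono)
    show "h ` ({0, 1} \<times> Tset n) \<subseteq> {B. \<exists>D. sumset B D = {1..k}}" using hin by blast
    show "finite {B. \<exists>D. sumset B D = {1..k}}"
    proof (rule finite_subset[of _ "Pow {..k}"])
      show "{B. \<exists>D. sumset B D = {1..k}} \<subseteq> Pow {..k}"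
      proof
        fix B assume "B \<in> {B. \<exists>D. sumset B D = {1..k}}"
        then obtain D where D: "sumset B D = {1..k}" by auto
        have "D \<noteq> {}" using D k unfolding sumset_def by auto
        then obtain e where "e \<in> D" by auto
        hence "\<forall>b\<in>B. b + e \<in> {1..k}" using D unfolding sumset_def by blast
        thus "B \<in> Pow {..k}" by auto
      qed
    qed simp
  qed
  finally show ?thesis unfolding n_def .
qed



definition Ncal :: "nat set \<Rightarrow> nat set set" where
  "Ncal C = {B. 0 \<in> B \<and> (\<exists>D. sumset B D = C)}"

lemma summand_basic:
  assumes S: "sumset B D = C" and C: "finite C" "C \<noteq> {}"
  shows "B \<noteq> {}" "D \<noteq> {}" "\<And>b. b \<in> B \<Longrightarrow> b \<le> Max C" "finite B"
proof -
  show "B \<noteq> {}" "D \<noteq> {}" using S C unfolding sumset_def by auto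
  then obtain e where e: "e \<in> D" by auto
  show bd: "\<And>b. b \<in> B \<Longrightarrow> b \<le> Max C"
  proof -
    fix b assume "b \<in> B"
    hence "b + e \<in> C" using S e unfolding sumset_def by blast
    thus "b \<le> Max C" using C by (meson Max_ge le_add1 order_trans)
  qed
  show "finite B" by (rule finite_subset[of _ "{..Max C}"]) (use bd in auto)
qed

lemma Ncal_finite: assumes C: "finite C" "C \<noteq> {}" shows "finite (Ncal C)"
proof (rule finite_subset[of _ "Pow {..Max C}"])
  show "Ncal C \<subseteq> Pow {..Max C}" unfolding Ncal_def using summand_basic(3)[OF _ C] by blast
qed simp

lemma upper:
  assumes C: "finite C" "C \<noteq> {}"
  shows "d C \<le> (Min C + 1) * card (Ncal C)"
proof -
  define h where "h p = (\<lambda>x. x + fst p) ` snd p" for p :: "nat \<times> nat set"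
  have sub: "{B. \<exists>D. sumset B D = C} \<subseteq> h ` ({..Min C} \<times> Ncal C)"
  proof
    fix B assume "B \<in> {B. \<exists>D. sumset B D = C}"
    then obtain D where S: "sumset B D = C" by auto
    note bas = summand_basic[OF S C]
    define \<beta> where "\<beta> = Min B"
    have bge: "\<And>b. b \<in> B \<Longrightarrow> \<beta> \<le> b" unfolding \<beta>_def using bas(4) by simp
    have bin: "\<beta> \<in> B" unfolding \<beta>_def using bas(1,4) by simp
    define B' where "B' = (\<lambda>x. x - \<beta>) ` B"
    define D' where "D' = (\<lambda>x. x + \<beta>) ` D"
    have S': "sumset B' D' = C"
    proof -
      have "sumset B' D' = sumset B D"
      proof (rule set_eqI, rule iffI)
        fix z assume "z \<in> sumset B' D'"
        then obtain b d where bd: "b \<in> B" "d \<in> D" "z = (b - \<beta>) + (d + \<beta>)" unfolding sumset_def B'_def D'_def by auto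
        hence "z = b + d" using bge[of b] by simp
        thus "z \<in> sumset B D" using bd unfolding sumset_def by blast
      next
        fix z assume "z \<in> sumset B D"
        then obtain b d where bd: "b \<in> B" "d \<in> D" "z = b + d" unfolding sumset_def by auto
        hence "z = (b - \<beta>) + (d + \<beta>)" using bge[of b] by simp
        thus "z \<in> sumset B' D'" unfolding sumset_def B'_def D'_def using bd by blast
      qed
      thus ?thesis using S by simp
    qed
    have B'N: "B' \<in> Ncal C" unfolding Ncal_def B'_def using S' bin unfolding B'_def by force
    have BB': "B = (\<lambda>x. x + \<beta>) ` B'" unfolding B'_def image_image using bge
      by (auto simp: image_iff)
    have "Min C \<in> C" using C by simp
    then obtain b d where "b \<in> B" "d \<in> D" "Min C = b + d" using S unfolding sumset_def by auto
    hence "\<beta> \<le> Min C" using bge by fastforce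
    hence "(\<beta>, B') \<in> {..Min C} \<times> Ncal C" using B'N by simp
    moreover have "B = h (\<beta>, B')" unfolding h_def using BB' by simp
    ultimately show "B \<in> h ` ({..Min C} \<times> Ncal C)" by blast
  qed
  have "d C \<le> card (h ` ({..Min C} \<times> Ncal C))" unfolding d_def
    by (rule card_mono[OF _ sub]) (use Ncal_finite[OF C] in simp)
  also have "\<dots> \<le> card ({..Min C} \<times> Ncal C)" by (rule card_image_le) (use Ncal_finite[OF C] in simp)
  also have "\<dots> = (Min C + 1) * card (Ncal C)" by (simp add: card_cartesian_product)
  finally show ?thesis .
qed



lemma phi_lemma:
  assumes C: "finite C" "C \<noteq> {}"
  shows "card (Ncal C) \<le> card (Tset (Max C - Min C))"
    and "(\<exists>z. Min C \<le> z \<and> z \<le> Max C \<and> z \<notin> C) \<Longrightarrow> card (Ncal C) < card (Tset (Max C - Min C))"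
proof -
  define a where "a = Min C"
  define M where "M = Max C"
  define \<phi> where "\<phi> B = B \<union> {x. x \<le> Max B \<and> x + a \<notin> C}" for B
  have aC: "a \<in> C" "M \<in> C" using C unfolding a_def M_def by auto
  have aM: "\<And>c. c \<in> C \<Longrightarrow> a \<le> c \<and> c \<le> M" using C unfolding a_def M_def by auto
  have props: "\<phi> B \<in> Tset (M - a) \<and> Max (\<phi> B) = Max B \<and> B = \<phi> B \<inter> {x. x + a \<in> C}
      \<and> Max B \<in> B \<and> (\<forall>b\<in>B. b + a \<in> C)" if B: "B \<in> Ncal C" for B
  proof -
    obtain D where S: "sumset B D = C" and B0: "0 \<in> B" using B unfolding Ncal_def by auto
    note bas = summand_basic[OF S C]
    have Dge: "\<And>d. d \<in> D \<Longrightarrow> a \<le> d"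
    proof -
      fix d assume "d \<in> D"
      hence "0 + d \<in> C" using S B0 unfolding sumset_def by blast
      thus "a \<le> d" using aM by auto
    qed
    have aD: "a \<in> D"
    proof -
      obtain b d where "b \<in> B" "d \<in> D" "a = b + d" using aC(1) S unfolding sumset_def by auto
      moreover have "a \<le> d" using Dge \<open>d \<in> D\<close> .
      ultimately show ?thesis by simp
    qed
    define \<mu> where "\<mu> = Max B"
    have muB: "\<mu> \<in> B" unfolding \<mu>_def using bas(1,4) by simp
    have bmu: "\<And>b. b \<in> B \<Longrightarrow> b \<le> \<mu>" unfolding \<mu>_def using bas(4) by simp
    have Ba: "\<And>b. b \<in> B \<Longrightarrow> b + a \<in> C" using S aD unfolding sumset_def by blast
    have muD: "\<And>d. d \<in> D \<Longrightarrow> \<mu> + d \<le> M"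
    proof -
      fix d assume "d \<in> D"
      hence "\<mu> + d \<in> C" using S muB unfolding sumset_def by blast
      thus "\<mu> + d \<le> M" using aM by auto
    qed
    have mua: "\<mu> + a \<le> M" using muD aD .
    have fin: "finite (\<phi> B)" unfolding \<phi>_def using bas(4) by auto
    have Mphi: "Max (\<phi> B) = \<mu>"
    proof (rule Max_eqI[OF fin])
      show "\<mu> \<in> \<phi> B" unfolding \<phi>_def using muB by simp
      fix y assume "y \<in> \<phi> B" thus "y \<le> \<mu>" unfolding \<phi>_def \<mu>_def using bmu \<mu>_def by auto
    qed
    have T: "\<phi> B \<in> Tset (M - a)"
    proof (rule Tset_I)
      show "0 \<in> \<phi> B" unfolding \<phi>_def using B0 by simp
      show "\<phi> B \<subseteq> {..M - a}"
      proof
        fix y assume "y \<in> \<phi> B"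
        hence "y \<le> \<mu>" unfolding \<phi>_def \<mu>_def using bmu \<mu>_def by auto
        thus "y \<in> {..M - a}" using mua by simp
      qed
      fix x assume x: "x \<le> M - a"
      show "\<exists>y\<in>\<phi> B. y \<le> x \<and> x \<le> y + (M - a - Max (\<phi> B))"
        unfolding Mphi
      proof (cases "x \<le> \<mu>")
        case True
        show "\<exists>y\<in>\<phi> B. y \<le> x \<and> x \<le> y + (M - a - \<mu>)"
        proof (cases "x \<in> B \<or> x + a \<notin> C")
          case True
          hence "x \<in> \<phi> B" unfolding \<phi>_def \<mu>_def using \<open>x \<le> \<mu>\<close> \<mu>_def by auto
          thus ?thesis by auto
        next
          case False
          hence "x + a \<in> C" by simp
          then obtain b d where bd: "b \<in> B" "d \<in> D" "x + a = b + d" using S unfolding sumset_def by auto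
          have "a \<le> d" using Dge bd(2) .
          moreover have "\<mu> + d \<le> M" using muD bd(2) .
          ultimately have "b \<le> x \<and> x \<le> b + (M - a - \<mu>)" using bd(3) mua by linarith
          moreover have "b \<in> \<phi> B" unfolding \<phi>_def using bd(1) by simp
          ultimately show ?thesis by blast
        qed
      next
        case False
        have "\<mu> \<in> \<phi> B" unfolding \<phi>_def using muB by simp
        moreover have "\<mu> \<le> x \<and> x \<le> \<mu> + (M - a - \<mu>)" using False x mua by linarith
        ultimately show "\<exists>y\<in>\<phi> B. y \<le> x \<and> x \<le> y + (M - a - \<mu>)" by blast
      qed
    qed
    have inv: "B = \<phi> B \<inter> {x. x + a \<in> C}" unfolding \<phi>_def using Ba by auto
    show ?thesis using T Mphi inv muB Ba unfolding \<mu>_def by auto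
  qed
  have inj: "inj_on \<phi> (Ncal C)"
    by (rule inj_onI) (metis props)
  have img: "\<phi> ` Ncal C \<subseteq> Tset (M - a)" using props by auto
  have eq: "card (Ncal C) = card (\<phi> ` Ncal C)" by (rule card_image[symmetric, OF inj])
  show "card (Ncal C) \<le> card (Tset (Max C - Min C))"
    unfolding eq a_def[symmetric] M_def[symmetric] by (rule card_mono[OF Tset_finite img])
  assume "\<exists>z. Min C \<le> z \<and> z \<le> Max C \<and> z \<notin> C"
  then obtain z where z: "a \<le> z" "z \<le> M" "z \<notin> C" unfolding a_def M_def by auto
  have Yin: "{0..z - a} \<in> Tset (M - a)" using z by (intro interval_Tset) simp
  have Ynot: "{0..z - a} \<notin> \<phi> ` Ncal C"
  proof
    assume "{0..z - a} \<in> \<phi> ` Ncal C"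
    then obtain B where B: "B \<in> Ncal C" "{0..z - a} = \<phi> B" by auto
    have "Max {0..z - a} = z - a" by (rule Max_eqI) auto
    hence "Max B = z - a" using props[OF B(1)] B(2) by simp
    hence "z - a \<in> B" using props[OF B(1)] by metis
    hence "z - a + a \<in> C" using props[OF B(1)] by blast
    thus False using z by simp
  qed
  show "card (Ncal C) < card (Tset (Max C - Min C))"
    unfolding eq a_def[symmetric] M_def[symmetric]
    by (rule psubset_card_mono[OF Tset_finite]) (use img Yin Ynot in blast)
qed



theorem mainTheorem9:
  fixes k :: nat and A :: "nat set"
  assumes "k \<ge> 1" and "A \<noteq> {}" and "A \<subset> {1..k}"
  shows "d {1..k} \<ge> d A \<and> (k \<noteq> 3 \<longrightarrow> d {1..k} > d A)"
proof -
  have finA: "finite A" using assms(3) finite_subset by blast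
  define a where "a = Min A"
  define M where "M = Max A"
  have aA: "a \<in> A" and MA: "M \<in> A" using finA assms(2) unfolding a_def M_def by auto
  have a1: "1 \<le> a" and Mk: "M \<le> k" using aA MA assms(3) by auto
  have aM: "a \<le> M" unfolding a_def M_def using finA assms(2) by simp
  have lb: "2 * card (Tset (k - 1)) \<le> d {1..k}" by (rule lower_bound[OF assms(1)])
  have ub: "d A \<le> (a + 1) * card (Ncal A)" unfolding a_def by (rule upper[OF finA assms(2)])
  have ph: "card (Ncal A) \<le> card (Tset (M - a))" unfolding a_def M_def by (rule phi_lemma(1)[OF finA assms(2)])
  have mo: "card (Tset (M - a)) \<le> card (Tset (k - a))" using Mk by (intro T_mono_card) simp
  have ch: "(a + 1) * card (Tset (k - a)) \<le> 2 * card (Tset (k - 1))"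
  proof -
    have "(a - 1 + 2) * card (Tset (k - a)) \<le> 2 * card (Tset (k - a + (a - 1)))" by (rule chain)
    moreover have "a - 1 + 2 = a + 1" "k - a + (a - 1) = k - 1" using a1 aM Mk by auto
    ultimately show ?thesis by simp
  qed
  have ub2: "d A \<le> (a + 1) * card (Tset (k - a))"
  proof -
    have "(a + 1) * card (Ncal A) \<le> (a + 1) * card (Tset (k - a))" using ph mo by (intro mult_le_mono2) simp
    thus ?thesis using ub by linarith
  qed
  have part1: "d A \<le> d {1..k}" using ub2 ch lb by linarith
  have part2: "d A < d {1..k}" if k3: "k \<noteq> 3"
  proof (cases "a = 1")
    case True
    show ?thesis
    proof (cases "M < k")
      case True
      have "card (Tset (M - a)) < card (Tset (k - 1))" using True \<open>a = 1\<close> aM by (intro T_strict_mono) simp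
      hence "(a + 1) * card (Ncal A) < 2 * card (Tset (k - 1))" using ph \<open>a = 1\<close> by simp
      thus ?thesis using ub lb by linarith
    next
      case False
      hence Mk': "M = k" using Mk by simp
      obtain z where z: "z \<in> {1..k}" "z \<notin> A" using assms(3) by blast
      have "card (Ncal A) < card (Tset (Max A - Min A))"
        by (rule phi_lemma(2)[OF finA assms(2)]) (use z Mk' \<open>a = 1\<close> in \<open>auto simp: a_def M_def\<close>)
      hence "(a + 1) * card (Ncal A) < 2 * card (Tset (k - 1))" using \<open>a = 1\<close> Mk' unfolding a_def M_def by simp
      thus ?thesis using ub lb by linarith
    qed
  next
    case False
    show ?thesis
    proof (cases "a = 2")
      case True
      have "3 * card (Tset (k - 2)) < 2 * card (Tset (Suc (k - 2)))" using k3 by (intro ratio_strict) simp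
      moreover have "Suc (k - 2) = k - 1" using True aM Mk by simp
      ultimately have "(a + 1) * card (Tset (k - a)) < 2 * card (Tset (k - 1))" using True by simp
      thus ?thesis using ub2 lb by linarith
    next
      case False
      hence "2 \<le> a - 1" using \<open>a \<noteq> 1\<close> a1 by simp
      hence "(a - 1 + 2) * card (Tset (k - a)) < 2 * card (Tset (k - a + (a - 1)))" by (rule chain_strict)
      moreover have "a - 1 + 2 = a + 1" "k - a + (a - 1) = k - 1" using a1 aM Mk by auto
      ultimately have "(a + 1) * card (Tset (k - a)) < 2 * card (Tset (k - 1))" by simp
      thus ?thesis using ub2 lb by linarith
    qed
  qed
  show ?thesis using part1 part2 by simp
qed

end
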